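(* As $n\to\infty$, $$ \sum_{q \text{ prime}}\sum_{m\ge 2}\frac{c_n(q^m)}{m q^m} = O\left(\frac{\omega(n)}{n}\right), $$ where $\omega(n)$ is the number of distinct prime divisors of $n$.
   Context: For a natural number $n$ and a positive integer $r$, define $c_n(r)=1$ if $r=q^m$ is a power ($m\ge1$) of a prime $q$ with $r\equiv 1\pmod n$, $c_n(r)=-1$ if $r=q^m$ is a prime power with $r\equiv -1\pmod n$, and $c_n(r)=0$ otherwise. *)

theory Defs
  imports "HOL-Analysis.Analysis" "HOL-Library.Landau_Symbols"
    "HOL-Computational_Algebra.Primes" "HOL-Number_Theory.Cong"
begin

text \<open>c_n(r): 1 if r is a prime power q^m (m >= 1) with r = 1 mod n,
  -1 if r is a prime power with r = -1 mod n, 0 otherwise.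
  (The first case takes precedence, relevant only when n divides 2.)\<close>
definition c :: "nat \<Rightarrow> nat \<Rightarrow> real" where
  "c n r = (if (\<exists>q m. prime q \<and> m \<ge> 1 \<and> r = q ^ m) then
              (if [int r = 1] (mod int n) then 1
               else if [int r = -1] (mod int n) then -1 else 0)
            else 0)"

definition omega :: "nat \<Rightarrow> nat" where
  "omega n = card (prime_factors n)"

definition S :: "nat \<Rightarrow> real" where
  "S n = (\<Sum>\<^sub>\<infinity>q\<in>{q::nat. prime q}. \<Sum>\<^sub>\<infinity>m\<in>{2::nat..}.
            c n (q ^ m) / (real m * real q ^ m))"

end

theory Submission
  imports Defs "HOL-Number_Theory.Residue_Primitive_Roots"
begin

lemma card_sub0: "A \<subseteq> {0::nat} \<Longrightarrow> card A \<le> 1"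
  using card_mono[of "{0::nat}" A] by simp

lemma card_mod_class_le:
  assumes "d > 0"
  shows "card {x::nat. x < k * d \<and> x mod d = r} \<le> k"
proof -
  have "inj_on (\<lambda>x. x div d) {x. x < k * d \<and> x mod d = r}"
    by (rule inj_onI) (metis (mono_tags, lifting) div_mod_decomp mem_Collect_eq)
  moreover have "(\<lambda>x. x div d) ` {x. x < k * d \<and> x mod d = r} \<subseteq> {..<k}"
    using assms by (auto simp: div_less_iff_less_mult)
  ultimately show ?thesis
    by (metis card_image card_lessThan card_mono finite_lessThan)
qed

lemma two_adic_aux:
  fixes x c :: nat
  assumes "odd x" "2 ^ Suc c dvd (x - 1) * (x + 1)"
  shows "2 ^ c dvd x - 1 \<or> 2 ^ c dvd x + 1"
proof -
  obtain u where u: "x = 2 * u + 1" using assms(1) oddE by blast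
  have e: "(x - 1) * (x + 1) = 4 * (u * (u + 1))" using u by (simp add: algebra_simps)
  show ?thesis
  proof (cases c)
    case 0 then show ?thesis by simp
  next
    case (Suc c')
    have "4 * 2 ^ c' dvd 4 * (u * (u + 1))"
      using assms(2) e Suc by (simp add: power_Suc mult.assoc)
    hence h: "2 ^ c' dvd u * (u + 1)" by (metis nat_mult_dvd_cancel_disj zero_neq_numeral)
    have "2 ^ c' dvd u \<or> 2 ^ c' dvd (u + 1)"
    proof (cases "odd u")
      case True
      hence "coprime (2 ^ c') u" by simp
      thus ?thesis using h by (metis coprime_dvd_mult_left_iff coprime_dvd_mult_right_iff)
    next
      case False
      hence "coprime (2 ^ c') (u + 1)" by simp
      thus ?thesis using h by (metis coprime_dvd_mult_left_iff coprime_dvd_mult_right_iff)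
    qed
    moreover have eqs: "x - 1 = 2 * u" "x + 1 = 2 * (u + 1)" "(2::nat) ^ c = 2 * 2 ^ c'" using u Suc by auto
    ultimately show ?thesis
    proof (elim disjE)
      assume "2 ^ c' dvd u" hence "2 * 2 ^ c' dvd 2 * u" by (rule mult_dvd_mono[OF dvd_refl])
      hence "2 ^ c dvd x - 1" unfolding eqs(1,3) .
      thus ?thesis by blast
    next
      assume "2 ^ c' dvd u + 1" hence "2 * 2 ^ c' dvd 2 * (u + 1)" by (rule mult_dvd_mono[OF dvd_refl])
      hence "2 ^ c dvd x + 1" unfolding eqs(2,3) .
      thus ?thesis by blast
    qed
  qed
qed

lemma two_adic:
  fixes x :: nat
  assumes "odd x" "2 ^ a dvd x ^ (2 ^ b) - 1"
  shows "2 ^ (a - b) dvd x - 1 \<or> 2 ^ (a - b) dvd x + 1"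
  using assms
proof (induction b arbitrary: x a)
  case 0 then show ?case by simp
next
  case (Suc b)
  define y where "y = x ^ 2"
  have oy: "odd y" using Suc.prems(1) by (simp add: y_def)
  have eq: "x ^ (2 ^ Suc b) = y ^ (2 ^ b)" unfolding y_def by (simp only: power_mult[symmetric] power_Suc)
  have "2 ^ a dvd y ^ (2 ^ b) - 1" by (subst eq[symmetric]) (rule Suc.prems(2))
  from Suc.IH[OF oy this] have h: "2 ^ (a - b) dvd y - 1 \<or> 2 ^ (a - b) dvd y + 1" .
  show ?case
  proof (cases "a - b \<le> 1")
    case True
    hence "a - Suc b = 0" by simp
    thus ?thesis by simp
  next
    case False
    define c where "c = a - b - 2"
    have c: "a - b = Suc (Suc c)" using False by (simp add: c_def)
    have ny: "\<not> 4 dvd y + 1"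
    proof
      assume "4 dvd y + 1"
      obtain u where u: "x = 2 * u + 1" using Suc.prems(1) oddE by blast
      have yeq: "y + 1 = 4 * (u * u + u) + 2" by (simp add: y_def u power2_eq_square algebra_simps)
      from \<open>4 dvd y + 1\<close> have "4 dvd 4 * (u * u + u) + 2" unfolding yeq .
      hence "(4::nat) dvd 2" using dvd_add_right_iff[OF dvd_triv_left[of 4 "u * u + u"], of 2] by blast
      thus False by simp
    qed
    have "\<not> 2 ^ (a - b) dvd y + 1"
    proof
      assume "2 ^ (a - b) dvd y + 1"
      moreover have "(2::nat) ^ (a - b) = 4 * 2 ^ c" unfolding c by (simp add: power_Suc)
      hence "4 dvd (2::nat) ^ (a - b)" by simp
      ultimately show False using ny dvd_trans by blast
    qed
    with h have "2 ^ (a - b) dvd y - 1" by blast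
    moreover have "y - 1 = (x - 1) * (x + 1)"
    proof -
      obtain u where u: "x = 2 * u + 1" using Suc.prems(1) oddE by blast
      have "y = 4 * (u * u + u) + 1" by (simp add: y_def u power2_eq_square algebra_simps)
      moreover have "(x - 1) * (x + 1) = 4 * (u * u + u)" by (simp add: u algebra_simps)
      ultimately show ?thesis by simp
    qed
    moreover have "Suc (a - Suc b) = a - b" using c by simp
    ultimately have "2 ^ Suc (a - Suc b) dvd (x - 1) * (x + 1)" by simp
    from two_adic_aux[OF Suc.prems(1) this] show ?thesis .
  qed
qed

lemma count_two_power:
  assumes "E > 0"
  shows "card {x::nat. x < 2 ^ a \<and> [x ^ E = 1] (mod 2 ^ a)} \<le> 2 * E"
proof (cases "a = 0")
  case True
  have "{x::nat. x < 2 ^ a \<and> [x ^ E = 1] (mod 2 ^ a)} \<subseteq> {0}" using True by auto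
  hence "card {x::nat. x < 2 ^ a \<and> [x ^ E = 1] (mod 2 ^ a)} \<le> 1"
    by (rule card_sub0)
  thus ?thesis using assms by linarith
next
  case False
  define g where "g = gcd E (2 ^ (a - 1))"
  have "g dvd 2 ^ (a - 1)" by (simp add: g_def)
  then obtain b where b: "g = 2 ^ b" by (auto simp: divides_primepow_nat)
  have gE: "g \<le> E" using assms by (simp add: g_def gcd_le1_nat)
  define T where "T = {x::nat. x < 2 ^ a \<and> [x ^ E = 1] (mod 2 ^ a)}"
  have key: "2 ^ (a - b) dvd x - 1 \<or> 2 ^ (a - b) dvd x + 1" if "x \<in> T" for x
  proof -
    have xc: "[x ^ E = 1] (mod 2 ^ a)" using that by (simp add: T_def)
    have ox: "odd x"
    proof
      assume "even x"
      hence "even (x ^ E)" using assms by simp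
      moreover have "[x ^ E = 1] (mod 2)" using xc False
        by (metis cong_dvd_modulus_nat dvd_power neq0_conv)
      ultimately show False by (simp add: cong_def)
    qed
    hence cop: "coprime x (2 ^ a)" by simp
    have "[x ^ totient (2 ^ a) = 1] (mod 2 ^ a)" by (rule euler_theorem[OF cop])
    moreover have "totient ((2::nat) ^ a) = 2 ^ (a - 1)" using False by (simp add: totient_prime_power)
    ultimately have "ord (2 ^ a) x dvd 2 ^ (a - 1)" using ord_divides by metis
    moreover have "ord (2 ^ a) x dvd E" using xc ord_divides by metis
    ultimately have "ord (2 ^ a) x dvd g" by (simp add: g_def)
    hence "[x ^ g = 1] (mod 2 ^ a)" using ord_divides by metis
    hence "2 ^ a dvd x ^ (2 ^ b) - 1" using b cong_to_1_nat by metis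
    thus ?thesis by (rule two_adic[OF ox])
  qed
  show ?thesis
  proof (cases "a \<le> b")
    case True
    have "card T \<le> card {..<(2::nat) ^ a}" by (intro card_mono) (auto simp: T_def)
    also have "\<dots> = 2 ^ a" by simp
    also have "\<dots> \<le> 2 ^ b" using True by (simp add: power_increasing)
    finally show ?thesis using gE b by (simp add: T_def)
  next
    case nab: False
    define d where "d = (2::nat) ^ (a - b)"
    have d2: "d \<ge> 2"
    proof -
      have "1 \<le> a - b" using nab by simp
      hence "(2::nat) ^ 1 \<le> 2 ^ (a - b)" by (rule power_increasing) simp
      thus ?thesis by (simp add: d_def)
    qed
    have ad: "(2::nat) ^ a = 2 ^ b * d" using nab by (simp add: d_def power_add[symmetric])
    have "T \<subseteq> {x. x < 2 ^ b * d \<and> x mod d = 1} \<union> {x. x < 2 ^ b * d \<and> x mod d = d - 1}"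
    proof
      fix x assume xT: "x \<in> T"
      have xl: "x < 2 ^ b * d" using xT ad by (simp add: T_def)
      from key[OF xT] have "d dvd x - 1 \<or> d dvd x + 1" by (simp add: d_def)
      moreover have "x \<ge> 1"
      proof (rule ccontr)
        assume "\<not> x \<ge> 1" hence "x = 0" by simp
        with xT have "[0 = (1::nat)] (mod 2 ^ a)" using assms by (simp add: T_def zero_power)
        thus False using False by (simp add: cong_def)
      qed
      ultimately have "x mod d = 1 \<or> x mod d = d - 1"
      proof (elim disjE)
        assume h1: "d dvd x - 1" and x1: "x \<ge> 1"
        have "[x = 1] (mod d)" using h1 x1 by (simp add: cong_altdef_nat)
        thus ?thesis using d2 by (simp add: cong_def)
      next
        assume h1: "d dvd x + 1"
        define y where "y = x mod d"
        have yl: "y < d" using d2 by (simp add: y_def)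
        have "(y + 1) mod d = (x + 1) mod d" unfolding y_def by (rule mod_add_left_eq)
        also have "\<dots> = 0" using h1 by simp
        finally have "(y + 1) mod d = 0" .
        moreover have "y + 1 \<le> d" using yl by simp
        ultimately have "y + 1 = d"
          by (metis le_neq_implies_less mod_less add_eq_0_iff_both_eq_0 one_neq_zero)
        hence "x mod d = d - 1" by (simp add: y_def)
        thus ?thesis by blast
      qed
      thus "x \<in> {x. x < 2 ^ b * d \<and> x mod d = 1} \<union> {x. x < 2 ^ b * d \<and> x mod d = d - 1}"
        using xl by auto
    qed
    hence "card T \<le> card ({x. x < 2 ^ b * d \<and> x mod d = 1} \<union> {x. x < 2 ^ b * d \<and> x mod d = d - 1})"
      by (intro card_mono) auto
    also have "\<dots> \<le> card {x. x < 2 ^ b * d \<and> x mod d = 1} + card {x. x < 2 ^ b * d \<and> x mod d = d - 1}"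
      by (rule card_Un_le)
    also have "\<dots> \<le> 2 ^ b + 2 ^ b" using d2 by (intro add_mono card_mod_class_le) auto
    finally show ?thesis using gE b by (simp add: T_def)
  qed
qed

lemma count_odd_prime_power:
  assumes p: "prime p" "odd p" and a: "a > 0" and E: "E > 0"
  shows "card {x::nat. x < p ^ a \<and> [x ^ E = 1] (mod p ^ a)} \<le> E"
proof -
  obtain g where g: "\<forall>k>0. residue_primroot (p ^ k) g"
    using residue_primroot_odd_prime_power_exists[OF p] by metis
  define m where "m = p ^ a"
  have m1: "m > 1" unfolding m_def by (rule one_less_power[OF prime_gt_1_nat[OF p(1)] a])
  have rg: "residue_primroot m g" using g a by (simp add: m_def)
  define ph where "ph = totient m"
  have bij: "bij_betw (\<lambda>i. g ^ i mod m) {..<ph} (totatives m)"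
    using residue_primroot_is_generator[OF m1 rg] by (simp add: ph_def)
  have ordg: "ord m g = ph" using rg by (simp add: residue_primroot_def ph_def)
  have ph0: "ph > 0" using m1 by (simp add: ph_def)
  define T where "T = {x::nat. x < m \<and> [x ^ E = 1] (mod m)}"
  define J where "J = inv_into {..<ph} (\<lambda>i. g ^ i mod m)"
  have Tsub: "T \<subseteq> totatives m"
  proof
    fix x assume "x \<in> T"
    then have xl: "x < m" and xc: "[x ^ E = 1] (mod m)" by (auto simp: T_def)
    have "coprime (x ^ E) m" by (rule cong_imp_coprime[OF cong_sym[OF xc]]) simp
    hence cx: "coprime x m" using E by (simp add: coprime_power_left_iff)
    have "x \<noteq> 0"
    proof
      assume "x = 0"
      with xc E have "[0 = 1] (mod m)" by (simp add: zero_power)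
      thus False using m1 by (simp add: cong_def)
    qed
    thus "x \<in> totatives m" using xl cx by (simp add: totatives_def)
  qed
  have img: "(\<lambda>i. g ^ i mod m) ` {..<ph} = totatives m" using bij by (simp add: bij_betw_def)
  have injJ: "inj_on J T" unfolding J_def by (rule inj_on_inv_into) (use Tsub img in auto)
  have JT: "J ` T \<subseteq> {j. j < ph \<and> ph dvd j * E}"
  proof
    fix j assume "j \<in> J ` T"
    then obtain x where xT: "x \<in> T" and j: "j = J x" by auto
    have xin: "x \<in> (\<lambda>i. g ^ i mod m) ` {..<ph}" using xT Tsub img by auto
    have jl: "j < ph" using inv_into_into[OF xin] j by (simp add: J_def)
    have gx: "g ^ j mod m = x" using f_inv_into_f[OF xin] j by (simp add: J_def)
    have xc: "[x ^ E = 1] (mod m)" using xT by (simp add: T_def)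
    have "x ^ E mod m = (g ^ j mod m) ^ E mod m" using gx by simp
    also have "\<dots> = (g ^ j) ^ E mod m" by (rule power_mod)
    also have "\<dots> = g ^ (j * E) mod m" by (simp only: power_mult)
    finally have "[g ^ (j * E) = x ^ E] (mod m)" unfolding cong_def by simp
    hence "[g ^ (j * E) = 1] (mod m)" using xc cong_trans by blast
    hence "ph dvd j * E" using ordg ord_divides by metis
    thus "j \<in> {j. j < ph \<and> ph dvd j * E}" using jl by simp
  qed
  define G where "G = gcd ph E"
  define t where "t = ph div G"
  have G0: "G > 0" using E by (simp add: G_def)
  have phGt: "ph = G * t" by (simp add: t_def G_def)
  have t0: "t > 0" using ph0 phGt by (metis gr0I mult_0_right less_irrefl)
  have GE: "G \<le> E" using E by (simp add: G_def gcd_le2_nat)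
  have "{j. j < ph \<and> ph dvd j * E} \<subseteq> {j. j < G * t \<and> j mod t = 0}"
  proof
    fix j assume "j \<in> {j. j < ph \<and> ph dvd j * E}"
    hence jl: "j < ph" and dv: "ph dvd j * E" by auto
    define e where "e = E div G"
    have EGe: "E = G * e" by (simp add: e_def G_def)
    have "G * t dvd G * (j * e)" using dv phGt EGe by (simp add: algebra_simps)
    hence "t dvd j * e" using G0 by simp
    moreover have "coprime t e" unfolding t_def e_def G_def
      using div_gcd_coprime[of ph E] ph0 by simp
    ultimately have "t dvd j" by (metis coprime_dvd_mult_left_iff)
    thus "j \<in> {j. j < G * t \<and> j mod t = 0}" using jl phGt by simp
  qed
  hence "card {j. j < ph \<and> ph dvd j * E} \<le> card {j. j < G * t \<and> j mod t = 0}"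
    by (intro card_mono) auto
  also have "\<dots> \<le> G" by (rule card_mod_class_le[OF t0])
  finally have c1: "card {j. j < ph \<and> ph dvd j * E} \<le> E" using GE by linarith
  have "card T = card (J ` T)" using injJ by (simp add: card_image)
  also have "\<dots> \<le> card {j. j < ph \<and> ph dvd j * E}" by (intro card_mono JT) auto
  finally show ?thesis using c1 by (simp add: T_def m_def)
qed

lemma count_prime_power:
  assumes p: "prime p" and E: "E > 0"
  shows "card {x::nat. x < p ^ a \<and> [x ^ E = 1] (mod p ^ a)} \<le> 2 * E"
proof (cases "p = 2")
  case True
  thus ?thesis using count_two_power[OF E, of a] by (simp only:)
next
  case False
  have "p > 2" using prime_ge_2_nat[OF p] False by linarith
  hence "odd p" using p prime_odd_nat by blast
  show ?thesis
  proof (cases "a = 0")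
    case True
    have "{x::nat. x < p ^ a \<and> [x ^ E = 1] (mod p ^ a)} \<subseteq> {0}" using True by auto
    hence "card {x::nat. x < p ^ a \<and> [x ^ E = 1] (mod p ^ a)} \<le> 1"
      by (rule card_sub0)
    thus ?thesis using E by linarith
  next
    case False
    hence "card {x::nat. x < p ^ a \<and> [x ^ E = 1] (mod p ^ a)} \<le> E"
      using count_odd_prime_power[OF p \<open>odd p\<close> _ E, of a] by simp
    thus ?thesis by linarith
  qed
qed

lemma count_roots:
  assumes "n > 0" "E > 0"
  shows "card {x::nat. x < n \<and> [x ^ E = 1] (mod n)} \<le> (2 * E) ^ omega n"
  using assms(1)
proof (induction n rule: less_induct)
  case (less n)
  show ?case
  proof (cases "n = 1")
    case True
    have "{x::nat. x < n \<and> [x ^ E = 1] (mod n)} \<subseteq> {0}" using True by auto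
    hence "card {x::nat. x < n \<and> [x ^ E = 1] (mod n)} \<le> 1"
      by (rule card_sub0)
    thus ?thesis using True by (simp add: omega_def)
  next
    case False
    then obtain p where p: "prime p" "p dvd n" using prime_factor_nat by blast
    define a where "a = multiplicity p n"
    have nz: "n \<noteq> 0" using less.prems by simp
    have nu: "\<not> is_unit p" using p(1) not_prime_unit by blast
    obtain r where r: "n = p ^ a * r" "\<not> p dvd r"
      using multiplicity_decompose'[OF nz nu] unfolding a_def by blast
    have a0: "a > 0" using p less.prems
      by (simp add: a_def prime_multiplicity_gt_zero_iff)
    have r0: "r > 0" using r less.prems by (cases r) auto
    have p2: "p \<ge> 2" by (rule prime_ge_2_nat[OF p(1)])
    have "p ^ 1 \<le> p ^ a" using a0 p2 by (intro power_increasing) auto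
    hence pa2: "p ^ a \<ge> 2" using p2 by simp
    have rn: "r < n" using r r0 pa2 by simp
    have cop: "coprime (p ^ a) r" using r(2) p(1) by (simp add: prime_imp_coprime)
    have pf: "prime_factors r = prime_factors n - {p}"
    proof
      show "prime_factors r \<subseteq> prime_factors n - {p}"
      proof
        fix q assume q: "q \<in> prime_factors r"
        hence "prime q" "q dvd r" using r0 by (auto simp: in_prime_factors_iff)
        hence "q dvd n" "q \<noteq> p" using r by auto
        thus "q \<in> prime_factors n - {p}" using \<open>prime q\<close> less.prems by (auto simp: in_prime_factors_iff)
      qed
    next
      show "prime_factors n - {p} \<subseteq> prime_factors r"
      proof
        fix q assume q: "q \<in> prime_factors n - {p}"
        hence pq: "prime q" "q dvd p ^ a * r" "q \<noteq> p" using r less.prems by (auto simp: in_prime_factors_iff)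
        have "\<not> q dvd p ^ a"
        proof
          assume "q dvd p ^ a"
          hence "q dvd p" using pq(1) prime_dvd_power by blast
          hence "q = p" using pq(1) p(1) primes_dvd_imp_eq by blast
          thus False using pq(3) by simp
        qed
        hence "q dvd r" using pq prime_dvd_mult_iff by blast
        thus "q \<in> prime_factors r" using pq r0 by (auto simp: in_prime_factors_iff)
      qed
    qed
    have pin: "p \<in> prime_factors n" using p less.prems by (auto simp: in_prime_factors_iff)
    have "card (prime_factors n) > 0" using pin by (auto simp: card_gt_0_iff)
    hence om: "omega n = Suc (omega r)"
      unfolding omega_def pf using pin by (simp add: card_Diff_singleton)
    define A where "A = {x::nat. x < p ^ a \<and> [x ^ E = 1] (mod p ^ a)}"
    define B where "B = {x::nat. x < r \<and> [x ^ E = 1] (mod r)}"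
    define T where "T = {x::nat. x < n \<and> [x ^ E = 1] (mod n)}"
    have cA: "card A \<le> 2 * E" unfolding A_def by (rule count_prime_power[OF p(1) assms(2)])
    have cB: "card B \<le> (2 * E) ^ omega r" unfolding B_def by (rule less.IH[OF rn r0])
    have inj: "inj_on (\<lambda>x. (x mod p ^ a, x mod r)) T"
    proof (rule inj_onI)
      fix x y assume xT: "x \<in> T" and yT: "y \<in> T" and e: "(x mod p ^ a, x mod r) = (y mod p ^ a, y mod r)"
      have "[x = y] (mod p ^ a)" "[x = y] (mod r)" using e by (auto simp: cong_def)
      hence "[x = y] (mod p ^ a * r)" using coprime_cong_mult_nat cop by blast
      hence "[x = y] (mod n)" using r(1) by simp
      thus "x = y" using xT yT cong_less_modulus_unique_nat by (auto simp: T_def)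
    qed
    have sub: "(\<lambda>x. (x mod p ^ a, x mod r)) ` T \<subseteq> A \<times> B"
    proof
      fix z assume "z \<in> (\<lambda>x. (x mod p ^ a, x mod r)) ` T"
      then obtain x where xT: "x \<in> T" and z: "z = (x mod p ^ a, x mod r)" by auto
      have xc: "[x ^ E = 1] (mod n)" using xT by (simp add: T_def)
      have c1: "[x ^ E = 1] (mod p ^ a)" using cong_dvd_modulus_nat[OF xc] r(1) by simp
      have c2: "[x ^ E = 1] (mod r)" using cong_dvd_modulus_nat[OF xc] r(1) by simp
      have "[(x mod p ^ a) ^ E = 1] (mod p ^ a)" using c1 by (simp add: cong_def power_mod)
      moreover have "[(x mod r) ^ E = 1] (mod r)" using c2 by (simp add: cong_def power_mod)
      moreover have "x mod p ^ a < p ^ a" using pa2 by (intro mod_less_divisor) linarith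
      moreover have "x mod r < r" using r0 by simp
      ultimately show "z \<in> A \<times> B" using z by (simp add: A_def B_def)
    qed
    have fA: "finite A" "finite B" by (auto simp: A_def B_def)
    have "card T = card ((\<lambda>x. (x mod p ^ a, x mod r)) ` T)" using inj by (simp add: card_image)
    also have "\<dots> \<le> card (A \<times> B)" using fA by (intro card_mono sub) auto
    also have "\<dots> = card A * card B" by (simp add: card_cartesian_product)
    also have "\<dots> \<le> (2 * E) * (2 * E) ^ omega r" using cA cB by (intro mult_mono) auto
    also have "\<dots> = (2 * E) ^ omega n" using om by simp
    finally show ?thesis by (simp add: T_def)
  qed
qed

lemma sum_inv_le_harm:
  "finite K \<Longrightarrow> 0 \<notin> K \<Longrightarrow> (\<Sum>k\<in>K. 1 / real k) \<le> harm (card K)"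
proof (induction "card K" arbitrary: K)
  case 0
  hence "K = {}" by simp
  thus ?case by (simp add: harm_def)
next
  case (Suc N)
  hence ne: "K \<noteq> {}" by auto
  define M where "M = Max K"
  have MK: "M \<in> K" using Suc.prems ne by (simp add: M_def)
  have cK: "card (K - {M}) = N" using Suc.hyps(2) MK by simp
  have IH: "(\<Sum>k\<in>K - {M}. 1 / real k) \<le> harm N"
    using Suc.hyps(1)[OF cK[symmetric]] Suc.prems cK by simp
  have "K \<subseteq> {1..M}" using Suc.prems by (auto simp: M_def Suc_le_eq intro: gr0I)
  hence "card K \<le> card {1..M}" by (intro card_mono) auto
  hence SM: "Suc N \<le> M" using Suc.hyps(2) by simp
  have "(\<Sum>k\<in>K. 1 / real k) = 1 / real M + (\<Sum>k\<in>K - {M}. 1 / real k)"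
    using Suc.prems MK by (simp add: sum.remove)
  also have "\<dots> \<le> 1 / real (Suc N) + harm N"
    using IH SM by (intro add_mono) (auto simp: divide_simps)
  also have "\<dots> = harm (Suc N)" by (simp add: harm_Suc field_simps)
  finally show ?case using Suc.hyps(2) by simp
qed

lemma harm_le_ln: "N \<ge> 1 \<Longrightarrow> harm N \<le> 1 + ln (real N)"
proof (induction N rule: dec_induct)
  case base
  show ?case by (simp add: harm_def)
next
  case (step N)
  have N0: "real N > 0" using step.hyps by simp
  have "ln (real N / real (Suc N)) \<le> real N / real (Suc N) - 1"
    using N0 by (intro ln_le_minus_one) simp
  also have "\<dots> = - (1 / real (Suc N))" by (simp add: field_simps)
  finally have "1 / real (Suc N) \<le> ln (real (Suc N)) - ln (real N)"
    using N0 by (simp add: ln_div)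
  hence "harm (Suc N) \<le> 1 + ln (real N) + (ln (real (Suc N)) - ln (real N))"
    using step.IH by (simp add: harm_Suc inverse_eq_divide)
  thus ?case by simp
qed

lemma harm_le_pow: "N \<le> 2 ^ k \<Longrightarrow> harm N \<le> real k + 1"
proof -
  assume N: "N \<le> 2 ^ k"
  have "harm N \<le> (harm (2 ^ k) :: real)" by (rule harm_mono[OF N])
  also have "\<dots> \<le> 1 + ln (real (2 ^ k))" by (rule harm_le_ln) simp
  also have "ln (real ((2::nat) ^ k)) = real k * ln 2" by (simp add: ln_realpow)
  also have "real k * ln 2 \<le> real k * 1" using ln_2_less_1 by (intro mult_left_mono) auto
  finally show ?thesis by simp
qed

definition Cg :: "nat \<Rightarrow> nat \<Rightarrow> bool" where
  "Cg n v \<longleftrightarrow> [int v = 1] (mod int n) \<or> [int v = -1] (mod int n)"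

lemma cong_harm:
  assumes n3: "n \<ge> 3" and fin: "finite V" and V: "\<And>v. v \<in> V \<Longrightarrow> v \<ge> 2 \<and> Cg n v"
    and cV: "card V \<le> 2 ^ k"
  shows "(\<Sum>v\<in>V. 1 / real v) \<le> 3 * (real k + 1) / real n"
proof -
  define V1 where "V1 = {v\<in>V. [int v = 1] (mod int n)}"
  define V2 where "V2 = V - V1"
  have n0: "real n > 0" using n3 by simp
  have split: "(\<Sum>v\<in>V. 1 / real v) = (\<Sum>v\<in>V1. 1 / real v) + (\<Sum>v\<in>V2. 1 / real v)"
    unfolding V2_def using fin by (subst sum.subset_diff[of V1]) (auto simp: V1_def)
  have c1: "card V1 \<le> 2 ^ k" using cV fin card_mono[of V V1] by (auto simp: V1_def)
  have c2: "card V2 \<le> 2 ^ k" using cV fin card_mono[of V V2] by (auto simp: V2_def)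
  have b1: "(\<Sum>v\<in>V1. 1 / real v) \<le> (real k + 1) / real n"
  proof -
    have mod1: "v mod n = 1" if "v \<in> V1" for v
    proof -
      have "[int v = int 1] (mod int n)" using that by (simp add: V1_def)
      hence "[v = 1] (mod n)" by (simp only: cong_int_iff)
      thus ?thesis using n3 by (simp add: cong_def)
    qed
    have eq: "n * (v div n) + 1 = v" if "v \<in> V1" for v
    proof -
      have "n * (v div n) + 1 = v div n * n + v mod n" using mod1[OF that] by (simp add: mult.commute)
      also have "\<dots> = v" by (rule div_mult_mod_eq)
      finally show ?thesis .
    qed
    have inj: "inj_on (\<lambda>v. v div n) V1"
    proof (rule inj_onI)
      fix v w assume vw: "v \<in> V1" "w \<in> V1" "v div n = w div n"
      have "v = n * (v div n) + 1" by (rule eq[OF vw(1), symmetric])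
      also have "\<dots> = n * (w div n) + 1" using vw(3) by simp
      also have "\<dots> = w" by (rule eq[OF vw(2)])
      finally show "v = w" .
    qed
    have pos: "v div n \<ge> 1" if "v \<in> V1" for v
    proof (rule ccontr)
      assume "\<not> v div n \<ge> 1"
      hence "v div n = 0" by simp
      hence "v = 1" using eq[OF that] by simp
      moreover have "v \<ge> 2" using V that by (simp add: V1_def)
      ultimately show False by simp
    qed
    have "(\<Sum>v\<in>V1. 1 / real v) \<le> (\<Sum>v\<in>V1. (1 / real n) * (1 / real (v div n)))"
    proof (rule sum_mono)
      fix v assume vV: "v \<in> V1"
      have "real (n * (v div n) + 1) = real v" using eq[OF vV] by (rule arg_cong)
      hence "real n * real (v div n) + 1 = real v" by simp
      hence "real v \<ge> real n * real (v div n)" by linarith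
      moreover have "real n * real (v div n) > 0" using n0 pos[OF vV] by simp
      ultimately show "1 / real v \<le> (1 / real n) * (1 / real (v div n))"
        by (simp add: divide_simps)
    qed
    also have "\<dots> = (1 / real n) * (\<Sum>v\<in>V1. 1 / real (v div n))" by (simp add: sum_distrib_left)
    also have "(\<Sum>v\<in>V1. 1 / real (v div n)) = (\<Sum>k\<in>(\<lambda>v. v div n) ` V1. 1 / real k)"
      by (simp add: sum.reindex[OF inj])
    also have "\<dots> \<le> harm (card ((\<lambda>v. v div n) ` V1))"
    proof (rule sum_inv_le_harm)
      show "finite ((\<lambda>v. v div n) ` V1)" using fin by (simp add: V1_def)
      show "0 \<notin> (\<lambda>v. v div n) ` V1" using pos by fastforce
    qed
    also have "card ((\<lambda>v. v div n) ` V1) = card V1" by (rule card_image[OF inj])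
    also have "harm (card V1) \<le> real k + 1" by (rule harm_le_pow[OF c1])
    finally show ?thesis using n0 by (simp add: divide_simps)
  qed
  have b2: "(\<Sum>v\<in>V2. 1 / real v) \<le> 2 * (real k + 1) / real n"
  proof -
    have dv: "n dvd v + 1" if "v \<in> V2" for v
    proof -
      have "[int v = -1] (mod int n)" using that V by (auto simp: V2_def V1_def Cg_def)
      hence "[int v + 1 = -1 + 1] (mod int n)" by (intro cong_add) auto
      hence "int n dvd int v + 1" by (simp add: cong_0_iff)
      hence "int n dvd int (v + 1)" by (simp only: of_nat_add of_nat_1)
      thus ?thesis by (simp only: int_dvd_int_iff)
    qed
    define kk where "kk = (\<lambda>v. (v + 1) div n)"
    have eq: "v + 1 = n * kk v" if "v \<in> V2" for v using dv[OF that] by (simp add: kk_def)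
    have inj: "inj_on kk V2"
    proof (rule inj_onI)
      fix v w assume "v \<in> V2" "w \<in> V2" "kk v = kk w"
      thus "v = w" using eq by (metis add_right_cancel)
    qed
    have pos: "kk v \<ge> 1" if "v \<in> V2" for v
    proof (rule ccontr)
      assume "\<not> kk v \<ge> 1"
      hence "kk v = 0" by simp
      thus False using eq[OF that] by simp
    qed
    have "(\<Sum>v\<in>V2. 1 / real v) \<le> (\<Sum>v\<in>V2. (2 / real n) * (1 / real (kk v)))"
    proof (rule sum_mono)
      fix v assume vV: "v \<in> V2"
      have v2: "v \<ge> 2" using V vV by (auto simp: V2_def)
      have "real (v + 1) = real (n * kk v)" using eq[OF vV] by (rule arg_cong)
      hence "real v + 1 = real n * real (kk v)" by simp
      hence "2 * real v \<ge> real n * real (kk v)" using v2 by linarith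
      moreover have "real n * real (kk v) > 0" using n0 pos[OF vV] by simp
      ultimately show "1 / real v \<le> (2 / real n) * (1 / real (kk v))"
        using v2 by (simp add: divide_simps)
    qed
    also have "\<dots> = (2 / real n) * (\<Sum>v\<in>V2. 1 / real (kk v))" by (simp add: sum_distrib_left)
    also have "(\<Sum>v\<in>V2. 1 / real (kk v)) = (\<Sum>k\<in>kk ` V2. 1 / real k)"
      by (simp add: sum.reindex[OF inj])
    also have "\<dots> \<le> harm (card (kk ` V2))"
    proof (rule sum_inv_le_harm)
      show "finite (kk ` V2)" using fin by (simp add: V2_def)
      show "0 \<notin> kk ` V2" using pos by fastforce
    qed
    also have "card (kk ` V2) = card V2" by (rule card_image[OF inj])
    also have "harm (card V2) \<le> real k + 1" by (rule harm_le_pow[OF c2])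
    finally show ?thesis using n0 by (simp add: divide_simps)
  qed
  have "(\<Sum>v\<in>V. 1 / real v) \<le> (real k + 1) / real n + 2 * (real k + 1) / real n"
    using split b1 b2 by linarith
  also have "\<dots> = 3 * (real k + 1) / real n" by (simp add: add_divide_distrib[symmetric])
  finally show ?thesis .
qed

definition hq :: "nat \<Rightarrow> nat \<Rightarrow> nat \<Rightarrow> real" where
  "hq n q m = (if Cg n (q ^ m) then 1 / (real m * real q ^ m) else 0)"

lemma prime_power_inj:
  fixes q q' :: nat
  assumes "prime q" "prime q'" "m \<ge> 1" "m' \<ge> 1" "q ^ m = q' ^ m'"
  shows "q = q' \<and> m = m'"
proof -
  have "q dvd q ^ m" using assms(3) by (cases m) auto
  hence "q dvd q' ^ m'" using assms(5) by simp
  hence "q dvd q'" using assms(1) prime_dvd_power by blast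
  hence qq: "q = q'" using assms(1,2) primes_dvd_imp_eq by blast
  have "1 < q" using assms(1) prime_gt_1_nat by blast
  hence "m = m'" using assms(5) qq power_inject_exp by blast
  thus ?thesis using qq by simp
qed

lemma Cg_sq:
  assumes "Cg n v" shows "[v ^ 2 = 1] (mod n)"
proof -
  have "[int v ^ 2 = 1] (mod int n)"
  proof (cases "[int v = 1] (mod int n)")
    case True
    from cong_pow[OF True, of 2] show ?thesis by simp
  next
    case False
    hence "[int v = -1] (mod int n)" using assms by (simp add: Cg_def)
    from cong_pow[OF this, of 2] show ?thesis by simp
  qed
  hence "[int (v ^ 2) = int 1] (mod int n)" by simp
  thus ?thesis by (simp only: cong_int_iff)
qed

lemma count_Q:
  assumes "n > 0" "m > 0"
  shows "card {q \<in> {q. prime q \<and> q < n}. Cg n (q ^ m)} \<le> (4 * m) ^ omega n"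
proof -
  have "{q \<in> {q. prime q \<and> q < n}. Cg n (q ^ m)} \<subseteq> {x::nat. x < n \<and> [x ^ (2 * m) = 1] (mod n)}"
  proof
    fix q assume "q \<in> {q \<in> {q. prime q \<and> q < n}. Cg n (q ^ m)}"
    hence "q < n" "Cg n (q ^ m)" by auto
    moreover from Cg_sq[OF this(2)] have "[q ^ (2 * m) = 1] (mod n)"
      by (simp add: power_mult[symmetric] mult.commute)
    ultimately show "q \<in> {x::nat. x < n \<and> [x ^ (2 * m) = 1] (mod n)}" by simp
  qed
  hence "card {q \<in> {q. prime q \<and> q < n}. Cg n (q ^ m)} \<le> card {x::nat. x < n \<and> [x ^ (2 * m) = 1] (mod n)}"
    by (intro card_mono) auto
  also have "\<dots> \<le> (2 * (2 * m)) ^ omega n" using assms by (intro count_roots) auto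
  finally show ?thesis by simp
qed

lemma block:
  assumes n3: "n \<ge> 3" and i: "i \<ge> 1"
  shows "(\<Sum>q\<in>{q. prime q \<and> q < n}. \<Sum>m\<in>{2^i..<2^Suc i}. hq n q m)
           \<le> 3 * (real i + 3) * (real (omega n) + 1) / (2 ^ i * real n)"
proof -
  define Q where "Q = {q. prime q \<and> q < n}"
  define B where "B = {(2::nat)^i..<2^Suc i}"
  define P where "P = {p \<in> Q \<times> B. Cg n (fst p ^ snd p)}"
  define w where "w = omega n"
  define K where "K = i + (i + 3) * w"
  have fQ: "finite Q" by (simp add: Q_def)
  have fB: "finite B" by (simp add: B_def)
  have fP: "finite P" using fQ fB by (simp add: P_def)
  have n0: "real n > 0" using n3 by simp
  have Bge: "m \<ge> 2 ^ i" if "m \<in> B" for m using that by (simp add: B_def)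
  have Bpos: "m \<ge> 1" if "m \<in> B" for m using Bge[OF that] by (metis one_le_power one_le_numeral order_trans)
  have Qpos: "q \<ge> 2" if "q \<in> Q" for q using that by (simp add: Q_def prime_ge_2_nat)
  have step1: "(\<Sum>q\<in>Q. \<Sum>m\<in>B. hq n q m) \<le>
      (\<Sum>q\<in>Q. \<Sum>m\<in>B. (if Cg n (q ^ m) then (1 / 2 ^ i) * (1 / real (q ^ m)) else 0))"
  proof (intro sum_mono)
    fix q m assume qQ: "q \<in> Q" and mB: "m \<in> B"
    have qp: "real q ^ m > 0" using Qpos[OF qQ] by simp
    have "real m \<ge> 2 ^ i" using Bge[OF mB] by (metis of_nat_le_iff of_nat_numeral of_nat_power)
    hence "1 / (real m * real q ^ m) \<le> (1 / 2 ^ i) * (1 / real q ^ m)"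
      using qp by (simp add: divide_simps mult_right_mono)
    thus "hq n q m \<le> (if Cg n (q ^ m) then (1 / 2 ^ i) * (1 / real (q ^ m)) else 0)"
      by (simp add: hq_def)
  qed
  have step2: "(\<Sum>q\<in>Q. \<Sum>m\<in>B. (if Cg n (q ^ m) then (1 / 2 ^ i) * (1 / real (q ^ m)) else 0))
      = (1 / 2 ^ i) * (\<Sum>p\<in>P. 1 / real (fst p ^ snd p))"
  proof -
    have "(\<Sum>q\<in>Q. \<Sum>m\<in>B. (if Cg n (q ^ m) then (1 / 2 ^ i) * (1 / real (q ^ m)) else 0))
        = (\<Sum>p\<in>Q \<times> B. (if Cg n (fst p ^ snd p) then (1 / 2 ^ i) * (1 / real (fst p ^ snd p)) else 0))"
      by (simp add: sum.cartesian_product split_beta)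
    also have "\<dots> = (\<Sum>p\<in>P. (1 / 2 ^ i) * (1 / real (fst p ^ snd p)))"
      unfolding P_def by (rule sum.inter_filter[symmetric]) (use fQ fB in simp)
    also have "\<dots> = (1 / 2 ^ i) * (\<Sum>p\<in>P. 1 / real (fst p ^ snd p))"
      by (simp add: sum_distrib_left)
    finally show ?thesis .
  qed
  define V where "V = (\<lambda>p. fst p ^ snd p) ` P"
  have injP: "inj_on (\<lambda>p. fst p ^ snd p) P"
  proof (rule inj_onI)
    fix p p' assume pP: "p \<in> P" "p' \<in> P" and e: "fst p ^ snd p = fst p' ^ snd p'"
    have "prime (fst p)" "prime (fst p')" "snd p \<ge> 1" "snd p' \<ge> 1"
      using pP Bpos by (auto simp: P_def Q_def)
    from prime_power_inj[OF this e] show "p = p'" by (simp add: prod_eq_iff)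
  qed
  have step3: "(\<Sum>p\<in>P. 1 / real (fst p ^ snd p)) = (\<Sum>v\<in>V. 1 / real v)"
    unfolding V_def by (simp add: sum.reindex[OF injP])
  have cardP: "card P \<le> 2 ^ K"
  proof -
    have "P \<subseteq> (\<Union>m\<in>B. (\<lambda>q. (q, m)) ` {q \<in> Q. Cg n (q ^ m)})"
      by (auto simp: P_def)
    hence "card P \<le> card (\<Union>m\<in>B. (\<lambda>q. (q, m)) ` {q \<in> Q. Cg n (q ^ m)})"
      using fQ fB by (intro card_mono) auto
    also have "\<dots> \<le> (\<Sum>m\<in>B. card ((\<lambda>q. (q, m)) ` {q \<in> Q. Cg n (q ^ m)}))"
      using fB by (rule card_UN_le)
    also have "\<dots> \<le> (\<Sum>m\<in>B. (2 ^ (i + 3)) ^ w)"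
    proof (rule sum_mono)
      fix m assume mB: "m \<in> B"
      have "card ((\<lambda>q. (q, m)) ` {q \<in> Q. Cg n (q ^ m)}) \<le> card {q \<in> Q. Cg n (q ^ m)}"
        by (rule card_image_le) (simp add: fQ)
      also have "\<dots> \<le> (4 * m) ^ w" unfolding Q_def w_def using n3 Bpos[OF mB] by (intro count_Q) auto
      also have "\<dots> \<le> (2 ^ (i + 3)) ^ w"
      proof (rule power_mono)
        have "m < 2 ^ Suc i" using mB by (simp add: B_def)
        thus "4 * m \<le> 2 ^ (i + 3)" by (simp add: power_add)
      qed simp
      finally show "card ((\<lambda>q. (q, m)) ` {q \<in> Q. Cg n (q ^ m)}) \<le> (2 ^ (i + 3)) ^ w" .
    qed
    also have "\<dots> = 2 ^ i * (2 ^ (i + 3)) ^ w" by (simp add: B_def)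
    also have "\<dots> = 2 ^ K" by (simp add: K_def power_add power_mult)
    finally show ?thesis .
  qed
  have cV: "card V \<le> 2 ^ K" unfolding V_def using cardP card_image[OF injP] by simp
  have Vprop: "v \<ge> 2 \<and> Cg n v" if vV: "v \<in> V" for v
  proof -
    obtain p where pP: "p \<in> P" and vp: "v = fst p ^ snd p" using vV unfolding V_def by blast
    define q where "q = fst p"
    define m where "m = snd p"
    have qm: "v = q ^ m" using vp by (simp add: q_def m_def)
    have "q \<in> Q" "m \<in> B" "Cg n (q ^ m)" using pP by (auto simp: P_def q_def m_def)
    have "q ^ 1 \<le> q ^ m" using Qpos[OF \<open>q \<in> Q\<close>] Bpos[OF \<open>m \<in> B\<close>] by (intro power_increasing) auto
    thus ?thesis using qm \<open>Cg n (q ^ m)\<close> Qpos[OF \<open>q \<in> Q\<close>] by simp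
  qed
  have step4: "(\<Sum>v\<in>V. 1 / real v) \<le> 3 * (real K + 1) / real n"
    using n3 fP cV Vprop by (intro cong_harm) (auto simp: V_def)
  have Kb: "real K + 1 \<le> (real i + 3) * (real w + 1)"
    by (simp add: K_def algebra_simps)
  have "(\<Sum>q\<in>Q. \<Sum>m\<in>B. hq n q m) \<le> (1 / 2 ^ i) * (3 * (real K + 1) / real n)"
    using step1 step2 step3 step4 by (smt (verit) mult_left_mono divide_nonneg_nonneg zero_le_power)
  also have "\<dots> \<le> (1 / 2 ^ i) * (3 * ((real i + 3) * (real w + 1)) / real n)"
    using Kb n0 by (intro mult_left_mono divide_right_mono) auto
  also have "\<dots> = 3 * (real i + 3) * (real (omega n) + 1) / (2 ^ i * real n)"
    by (simp add: w_def field_simps)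
  finally show ?thesis unfolding Q_def B_def .
qed

lemma geo_sum: "(\<Sum>i<L. (real i + 3) / 2 ^ i) = 8 - (2 * real L + 8) / 2 ^ L"
proof (induction L)
  case 0 then show ?case by simp
next
  case (Suc L)
  show ?case by (simp add: Suc.IH field_simps)
qed

lemma geo_bound: "(\<Sum>i\<in>{1..<L}. (real i + 3) / 2 ^ i) \<le> 8"
proof -
  have "(\<Sum>i\<in>{1..<L}. (real i + 3) / 2 ^ i) \<le> (\<Sum>i<L. (real i + 3) / 2 ^ i)"
    by (intro sum_mono2) auto
  also have "\<dots> \<le> 8" by (simp add: geo_sum)
  finally show ?thesis .
qed

lemma F_bound_aux:
  assumes n3: "n \<ge> 3" and L: "L \<ge> 1"
  shows "(\<Sum>q\<in>{q. prime q \<and> q < n}. \<Sum>m\<in>{2..<2^L}. hq n q m)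
          \<le> 3 * (real (omega n) + 1) / real n * (\<Sum>i\<in>{1..<L}. (real i + 3) / 2 ^ i)"
  using L
proof (induction L rule: dec_induct)
  case base
  show ?case by simp
next
  case (step L)
  define Q where "Q = {q. prime q \<and> q < n}"
  define c where "c = 3 * (real (omega n) + 1) / real n"
  have L2: "(2::nat) \<le> 2 ^ L" using step.hyps(1)
    by (metis power_increasing power_one_right one_le_numeral)
  have un: "{2..<2 ^ Suc L} = {2..<2 ^ L} \<union> {(2::nat) ^ L..<2 ^ Suc L}" using L2 by auto
  have "(\<Sum>q\<in>Q. \<Sum>m\<in>{2..<2^Suc L}. hq n q m)
        = (\<Sum>q\<in>Q. (\<Sum>m\<in>{2..<2^L}. hq n q m) + (\<Sum>m\<in>{2^L..<2^Suc L}. hq n q m))"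
    unfolding un by (intro sum.cong refl sum.union_disjoint) auto
  also have "\<dots> = (\<Sum>q\<in>Q. \<Sum>m\<in>{2..<2^L}. hq n q m) + (\<Sum>q\<in>Q. \<Sum>m\<in>{2^L..<2^Suc L}. hq n q m)"
    by (rule sum.distrib)
  also have "\<dots> \<le> c * (\<Sum>i\<in>{1..<L}. (real i + 3) / 2 ^ i) + 3 * (real L + 3) * (real (omega n) + 1) / (2 ^ L * real n)"
    using step.IH block[OF n3 step.hyps(1)] unfolding Q_def c_def by (intro add_mono) auto
  also have "3 * (real L + 3) * (real (omega n) + 1) / (2 ^ L * real n) = c * ((real L + 3) / 2 ^ L)"
    by (simp add: c_def field_simps)
  also have "c * (\<Sum>i\<in>{1..<L}. (real i + 3) / 2 ^ i) + c * ((real L + 3) / 2 ^ L)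
             = c * (\<Sum>i\<in>{1..<Suc L}. (real i + 3) / 2 ^ i)"
    using step.hyps(1) by (simp add: sum.atLeastLessThan_Suc distrib_left)
  finally show ?case unfolding Q_def c_def .
qed

lemma F_bound:
  assumes n3: "n \<ge> 3" and L: "L \<ge> 1"
  shows "(\<Sum>q\<in>{q. prime q \<and> q < n}. \<Sum>m\<in>{2..<2^L}. hq n q m) \<le> 24 * (real (omega n) + 1) / real n"
proof -
  have c0: "3 * (real (omega n) + 1) / real n \<ge> 0" by simp
  have "(\<Sum>q\<in>{q. prime q \<and> q < n}. \<Sum>m\<in>{2..<2^L}. hq n q m)
          \<le> 3 * (real (omega n) + 1) / real n * (\<Sum>i\<in>{1..<L}. (real i + 3) / 2 ^ i)"
    by (rule F_bound_aux[OF n3 L])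
  also have "\<dots> \<le> 3 * (real (omega n) + 1) / real n * 8"
    by (rule mult_left_mono[OF geo_bound c0])
  also have "\<dots> = 24 * (real (omega n) + 1) / real n" by simp
  finally show ?thesis .
qed

lemma c_abs: "\<bar>c n r\<bar> \<le> (if Cg n r then 1 else 0)"
  unfolding c_def Cg_def by auto

lemma f_bound:
  assumes "q \<ge> 1" "m \<ge> 1"
  shows "\<bar>c n (q ^ m) / (real m * real q ^ m)\<bar> \<le> hq n q m"
proof -
  have pos: "real m * real q ^ m > 0" using assms by simp
  have "\<bar>c n (q ^ m) / (real m * real q ^ m)\<bar> = \<bar>c n (q ^ m)\<bar> / (real m * real q ^ m)"
    by (rule abs_div_pos[OF pos, symmetric])
  also have "\<dots> \<le> (if Cg n (q ^ m) then 1 else 0) / (real m * real q ^ m)"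
    by (rule divide_right_mono[OF c_abs less_imp_le[OF pos]])
  also have "\<dots> = hq n q m" unfolding hq_def by (cases "Cg n (q ^ m)") simp_all
  finally show ?thesis .
qed

lemma hq_le:
  assumes "q \<ge> 1" "m \<ge> 1"
  shows "0 \<le> hq n q m" "hq n q m \<le> (1 / real q) ^ m"
proof -
  have pos: "real q ^ m > 0" using assms by simp
  show "0 \<le> hq n q m" unfolding hq_def using pos by simp
  have m1: "real m \<ge> 1" using assms by simp
  have "1 * real q ^ m \<le> real m * real q ^ m"
    by (rule mult_right_mono[OF m1 less_imp_le[OF pos]])
  hence le: "real q ^ m \<le> real m * real q ^ m" by simp
  have pp: "0 < (real m * real q ^ m) * real q ^ m" using pos m1 by simp
  have "1 / (real m * real q ^ m) \<le> 1 / real q ^ m"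
    by (rule divide_left_mono[OF le zero_le_one pp])
  thus "hq n q m \<le> (1 / real q) ^ m" by (simp add: hq_def power_one_over)
qed

lemma geom_has_sum:
  assumes q2: "q \<ge> 2"
  shows "((\<lambda>m. (1 / real q) ^ m) has_sum ((1 / real q) ^ K / (1 - 1 / real q))) {K..}"
proof -
  define x where "x = 1 / real q"
  have x0: "x \<ge> 0" and x1: "norm x < 1" using q2 by (auto simp: x_def)
  have "(\<lambda>j. x ^ K * x ^ j) sums (x ^ K * (1 / (1 - x)))"
    by (rule sums_mult[OF geometric_sums[OF x1]])
  hence "(\<lambda>j. x ^ (j + K)) sums (x ^ K / (1 - x))" by (simp add: power_add mult.commute)
  hence "((\<lambda>j. x ^ (j + K)) has_sum (x ^ K / (1 - x))) UNIV"
    using x0 by (intro sums_nonneg_imp_has_sum) auto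
  hence "(((\<lambda>m. x ^ m) \<circ> (\<lambda>j. j + K)) has_sum (x ^ K / (1 - x))) UNIV" by (simp add: o_def)
  hence "((\<lambda>m. x ^ m) has_sum (x ^ K / (1 - x))) ((\<lambda>j. j + K) ` UNIV)"
    by (subst has_sum_reindex) (auto simp: inj_on_def)
  moreover have "(\<lambda>j. j + K) ` UNIV = {K..}"
  proof
    show "{K..} \<subseteq> (\<lambda>j. j + K) ` UNIV"
    proof
      fix y assume "y \<in> {K..}"
      hence "y = (y - K) + K" by simp
      thus "y \<in> (\<lambda>j. j + K) ` UNIV" by blast
    qed
  qed auto
  ultimately show ?thesis by (simp add: x_def)
qed

lemma inner_bound:
  assumes q2: "q \<ge> 2" and M: "M \<ge> 2"
  shows "(\<lambda>m. c n (q ^ m) / (real m * real q ^ m)) summable_on {2..}"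
    and "\<bar>\<Sum>\<^sub>\<infinity>m\<in>{2..}. c n (q ^ m) / (real m * real q ^ m)\<bar>
           \<le> (\<Sum>m\<in>{2..<M}. hq n q m) + (1 / real q) ^ M / (1 - 1 / real q)"
proof -
  define f where "f = (\<lambda>m. c n (q ^ m) / (real m * real q ^ m))"
  define g where "g = (\<lambda>m. if m < M then hq n q m else (1 / real q) ^ m)"
  have un: "{2..} = {2..<M} \<union> {M..}" using M by auto
  have h1: "(g has_sum (\<Sum>m\<in>{2..<M}. hq n q m)) {2..<M}"
    by (rule has_sum_finiteI) (auto simp: g_def intro!: sum.cong)
  have h2: "(g has_sum ((1 / real q) ^ M / (1 - 1 / real q))) {M..}"
    using geom_has_sum[OF q2, of M] by (subst has_sum_cong[where g = "\<lambda>m. (1 / real q) ^ m"]) (auto simp: g_def)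
  have hg: "(g has_sum ((\<Sum>m\<in>{2..<M}. hq n q m) + (1 / real q) ^ M / (1 - 1 / real q))) {2..}"
    unfolding un by (rule has_sum_Un_disjoint[OF h1 h2]) auto
  have le: "norm (f m) \<le> g m" if "m \<in> {2..}" for m
  proof -
    have m1: "m \<ge> 1" "q \<ge> 1" using that q2 by auto
    have "norm (f m) \<le> hq n q m" using f_bound[OF m1(2) m1(1)] by (simp add: f_def)
    also have "\<dots> \<le> g m" using hq_le[OF m1(2) m1(1)] by (simp add: g_def)
    finally show ?thesis .
  qed
  have "(\<lambda>m. norm (f m)) summable_on {2..}"
    by (rule summable_on_comparison_test[OF has_sum_imp_summable[OF hg]]) (use le in auto)
  hence fs: "f summable_on {2..}" by (rule abs_summable_summable)
  thus "(\<lambda>m. c n (q ^ m) / (real m * real q ^ m)) summable_on {2..}" by (simp add: f_def)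
  have "norm (infsum f {2..}) \<le> (\<Sum>m\<in>{2..<M}. hq n q m) + (1 / real q) ^ M / (1 - 1 / real q)"
    by (rule norm_infsum_le[OF has_sum_infsum[OF fs] hg le])
  thus "\<bar>\<Sum>\<^sub>\<infinity>m\<in>{2..}. c n (q ^ m) / (real m * real q ^ m)\<bar>
           \<le> (\<Sum>m\<in>{2..<M}. hq n q m) + (1 / real q) ^ M / (1 - 1 / real q)" by (simp add: f_def)
qed

lemma tele_has_sum:
  assumes n2: "n \<ge> 2"
  shows "((\<lambda>k. 1 / (real k * (real k - 1))) has_sum (1 / (real n - 1))) {n..}"
proof -
  define F where "F = (\<lambda>j. inverse ((real n - 1) + real j))"
  have "filterlim (\<lambda>j. (real n - 1) + real j) at_top sequentially"
    by (rule filterlim_tendsto_add_at_top[OF tendsto_const filterlim_real_sequentially])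
  hence "F \<longlonglongrightarrow> 0" unfolding F_def by (rule tendsto_inverse_0_at_top)
  hence "(\<lambda>j. F j - F (Suc j)) sums (F 0 - 0)" by (rule telescope_sums')
  moreover have "F j - F (Suc j) = 1 / (real (j + n) * (real (j + n) - 1))" for j
  proof -
    have a: "(real n - 1) + real j > 0" using n2 by simp
    show ?thesis using a by (simp add: F_def field_simps)
  qed
  moreover have "F 0 - 0 = 1 / (real n - 1)" by (simp add: F_def divide_inverse)
  ultimately have "(\<lambda>j. 1 / (real (j + n) * (real (j + n) - 1))) sums (1 / (real n - 1))" by simp
  hence "((\<lambda>j. 1 / (real (j + n) * (real (j + n) - 1))) has_sum (1 / (real n - 1))) UNIV"
  proof (rule sums_nonneg_imp_has_sum)
    fix j show "0 \<le> 1 / (real (j + n) * (real (j + n) - 1))" using n2 by simp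
  qed
  hence "(((\<lambda>k. 1 / (real k * (real k - 1))) \<circ> (\<lambda>j. j + n)) has_sum (1 / (real n - 1))) UNIV"
    by (simp add: o_def)
  hence "((\<lambda>k. 1 / (real k * (real k - 1))) has_sum (1 / (real n - 1))) ((\<lambda>j. j + n) ` UNIV)"
    by (subst has_sum_reindex) (auto simp: inj_on_def)
  moreover have "(\<lambda>j. j + n) ` UNIV = {n..}"
  proof
    show "{n..} \<subseteq> (\<lambda>j. j + n) ` UNIV"
    proof
      fix y assume "y \<in> {n..}"
      hence "y = (y - n) + n" by simp
      thus "y \<in> (\<lambda>j. j + n) ` UNIV" by blast
    qed
  qed auto
  ultimately show ?thesis by simp
qed

lemma two_n_le: "n \<ge> 1 \<Longrightarrow> 2 * n \<le> (2::nat) ^ n"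
proof (induction n rule: dec_induct)
  case base then show ?case by simp
next
  case (step n)
  have "2 * Suc n \<le> 2 * n + 2 * n" using step.hyps by simp
  also have "\<dots> \<le> 2 ^ n + 2 ^ n" using step.IH by simp
  finally show ?case by simp
qed

lemma pow_big: "n ^ 2 \<le> (2::nat) ^ (2 ^ n)"
proof (cases "n = 0")
  case True then show ?thesis by simp
next
  case False
  have "n ^ 2 \<le> (2 ^ n) ^ 2" using less_exp[of n] by (intro power_mono) auto
  also have "\<dots> = 2 ^ (2 * n)" by (simp add: power_mult[symmetric] mult.commute)
  also have "\<dots> \<le> 2 ^ (2 ^ n)" using two_n_le[of n] False by (intro power_increasing) auto
  finally show ?thesis .
qed

lemma omega_pos: "n \<ge> 2 \<Longrightarrow> omega n \<ge> 1"
proof -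
  assume n2: "n \<ge> 2"
  obtain p where p: "prime p" "p dvd n" using prime_factor_nat[of n] n2 by auto
  hence "p \<in> prime_factors n" using n2 by (auto simp: in_prime_factors_iff)
  hence "card (prime_factors n) > 0" by (auto simp: card_gt_0_iff)
  thus ?thesis by (simp add: omega_def)
qed

lemma tail_le:
  assumes q2: "q \<ge> 2"
  shows "(1 / real q) ^ M / (1 - 1 / real q) \<le> 2 * (1 / 2) ^ M"
proof -
  have a: "(1 / real q) ^ M \<le> (1 / 2) ^ M"
    using q2 by (intro power_mono) (auto simp: divide_simps)
  have b: "1 - 1 / real q \<ge> 1 / 2" using q2 by (auto simp: divide_simps)
  have "(1 / real q) ^ M / (1 - 1 / real q) \<le> (1 / 2) ^ M / (1 / 2)"
    by (rule frac_le[OF _ a _ b]) auto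
  also have "\<dots> = 2 * (1 / 2) ^ M" by simp
  finally show ?thesis .
qed

lemma main_bound:
  assumes n3: "n \<ge> 3"
  shows "\<bar>S n\<bar> \<le> 24 * (real (omega n) + 1) / real n + 2 / real n + 2 / real n"
proof -
  define M where "M = (2::nat) ^ n"
  define IQ where "IQ = (\<lambda>q. \<Sum>\<^sub>\<infinity>m\<in>{2::nat..}. c n (q ^ m) / (real m * real q ^ m))"
  define Pr where "Pr = {q::nat. prime q}"
  define P1 where "P1 = {q::nat. prime q \<and> q < n}"
  define P2 where "P2 = {q::nat. prime q \<and> \<not> q < n}"
  define G where "G = (\<lambda>q. if q < n then (\<Sum>m\<in>{2..<M}. hq n q m) + (1 / real q) ^ M / (1 - 1 / real q)
                       else 1 / (real q * (real q - 1)))"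
  have SIQ: "S n = infsum IQ Pr" by (simp add: S_def IQ_def Pr_def)
  have M2: "M \<ge> 2" using n3 by (simp add: M_def) (metis power_increasing power_one_right one_le_numeral order_trans le_trans Suc_leD numeral_3_eq_3 Suc_le_eq less_imp_le_nat)
  have Pr_un: "Pr = P1 \<union> P2" by (auto simp: Pr_def P1_def P2_def)
  have disj: "P1 \<inter> P2 = {}" by (auto simp: P1_def P2_def)
  have fP1: "finite P1" by (simp add: P1_def)
  have bnd: "norm (IQ q) \<le> G q" if "q \<in> Pr" for q
  proof -
    have q2: "q \<ge> 2" using that by (simp add: Pr_def prime_ge_2_nat)
    show ?thesis
    proof (cases "q < n")
      case True
      thus ?thesis using inner_bound(2)[OF q2 M2, of n] by (simp add: IQ_def G_def)
    next
      case False
      have "norm (IQ q) \<le> (\<Sum>m\<in>{2..<2}. hq n q m) + (1 / real q) ^ 2 / (1 - 1 / real q)"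
        using inner_bound(2)[OF q2 order.refl, of n] by (simp add: IQ_def)
      also have "\<dots> = 1 / (real q * (real q - 1))"
      proof -
        have "real q \<ge> 2" using q2 by simp
        thus ?thesis by (simp add: field_simps power2_eq_square)
      qed
      finally show ?thesis using False by (simp add: G_def)
    qed
  qed
  have tele: "((\<lambda>k. 1 / (real k * (real k - 1))) has_sum (1 / (real n - 1))) {n..}"
    using n3 by (intro tele_has_sum) simp
  have sumP2: "(\<lambda>k. 1 / (real k * (real k - 1))) summable_on P2"
    by (rule summable_on_subset[OF has_sum_imp_summable[OF tele]]) (auto simp: P2_def)
  have GP2: "G summable_on P2"
    using sumP2 by (subst summable_on_cong[where g = "\<lambda>k. 1 / (real k * (real k - 1))"]) (auto simp: G_def P2_def)
  have GP1: "G summable_on P1" using fP1 by simp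
  have GPr: "G summable_on Pr" unfolding Pr_un by (rule summable_on_Un_disjoint[OF GP1 GP2 disj])
  have "(\<lambda>q. norm (IQ q)) summable_on Pr"
    by (rule summable_on_comparison_test[OF GPr]) (use bnd in auto)
  hence IQs: "IQ summable_on Pr" by (rule abs_summable_summable)
  have "norm (infsum IQ Pr) \<le> infsum G Pr"
    by (rule norm_infsum_le[OF has_sum_infsum[OF IQs] has_sum_infsum[OF GPr] bnd])
  also have "infsum G Pr = infsum G P1 + infsum G P2"
    unfolding Pr_un by (rule infsum_Un_disjoint[OF GP1 GP2 disj])
  also have "infsum G P1 = sum G P1" using fP1 by simp
  also have "infsum G P2 \<le> 1 / (real n - 1)"
  proof -
    have "infsum G P2 \<le> infsum (\<lambda>k. 1 / (real k * (real k - 1))) {n..}"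
    proof (rule infsum_mono_neutral[OF GP2 has_sum_imp_summable[OF tele]])
      fix x assume "x \<in> P2 \<inter> {n..}"
      thus "G x \<le> 1 / (real x * (real x - 1))" by (simp add: G_def P2_def)
    next
      fix x assume "x \<in> P2 - {n..}"
      thus "G x \<le> 0" by (simp add: P2_def)
    next
      fix x assume "x \<in> {n..} - P2"
      hence "real x \<ge> 3" using n3 by simp
      thus "1 / (real x * (real x - 1)) \<ge> 0" by simp
    qed
    also have "\<dots> = 1 / (real n - 1)" by (rule infsumI[OF tele])
    finally show ?thesis .
  qed
  also have "1 / (real n - 1) \<le> 2 / real n"
  proof -
    have "real n \<ge> 3" using n3 by simp
    thus ?thesis by (simp add: divide_simps)
  qed
  also have "sum G P1 = (\<Sum>q\<in>P1. \<Sum>m\<in>{2..<M}. hq n q m) + (\<Sum>q\<in>P1. (1 / real q) ^ M / (1 - 1 / real q))"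
    by (simp add: G_def P1_def sum.distrib)
  also have "(\<Sum>q\<in>P1. \<Sum>m\<in>{2..<M}. hq n q m) \<le> 24 * (real (omega n) + 1) / real n"
    unfolding P1_def M_def using n3 by (intro F_bound) auto
  also have "(\<Sum>q\<in>P1. (1 / real q) ^ M / (1 - 1 / real q)) \<le> 2 / real n"
  proof -
    have "(\<Sum>q\<in>P1. (1 / real q) ^ M / (1 - 1 / real q)) \<le> (\<Sum>q\<in>P1. 2 * (1 / 2) ^ M)"
      by (intro sum_mono tail_le) (simp add: P1_def prime_ge_2_nat)
    also have "\<dots> = real (card P1) * (2 * (1 / 2) ^ M)" by simp
    also have "\<dots> \<le> real n * (2 * (1 / 2) ^ M)"
    proof (intro mult_right_mono)
      have "P1 \<subseteq> {..<n}" by (auto simp: P1_def)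
      hence "card P1 \<le> n" using card_mono[of "{..<n}" P1] by simp
      thus "real (card P1) \<le> real n" by simp
    qed simp
    also have "\<dots> \<le> 2 / real n"
    proof -
      have "real (n ^ 2) \<le> real ((2::nat) ^ M)" unfolding M_def using pow_big[of n] by (simp only: of_nat_le_iff)
      hence h: "real n * real n \<le> 2 ^ M" by (simp add: power2_eq_square)
      have n0: "real n > 0" using n3 by simp
      have "real n * (2 * (1 / 2) ^ M) = 2 * real n / 2 ^ M" by (simp add: power_one_over)
      also have "\<dots> \<le> 2 / real n" using h n0 by (simp add: divide_simps)
      finally show ?thesis .
    qed
    finally show ?thesis .
  qed
  finally show ?thesis unfolding SIQ by simp
qed

theorem lemma9:
  shows "S \<in> O[at_top](\<lambda>n. real (omega n) / real n)"
proof (rule bigoI[where c = 52])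
  show "\<forall>\<^sub>F n in at_top. norm (S n) \<le> 52 * norm (real (omega n) / real n)"
    using eventually_ge_at_top[of "3::nat"]
  proof eventually_elim
    case (elim n)
    have w1: "real (omega n) \<ge> 1" using omega_pos[of n] elim by simp
    have n0: "real n > 0" using elim by simp
    have "norm (S n) \<le> 24 * (real (omega n) + 1) / real n + 2 / real n + 2 / real n"
      using main_bound[OF elim] by simp
    also have "\<dots> = (24 * real (omega n) + 28) / real n" using n0 by (simp add: field_simps)
    also have "\<dots> \<le> (52 * real (omega n)) / real n" using w1 n0 by (intro divide_right_mono) auto
    also have "\<dots> = 52 * norm (real (omega n) / real n)" using n0 by simp
    finally show ?case .
  qed
qed

end
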